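(* Let $n=2k+1$ with $k\ge 1$. Then $W=\{a_1,a_{k+1}\}$ is a local resolving set of $U_n$.
   Context: For $n\ge 3$, $U_n$ is the graph with vertex set $\{a_i,b_i,c_i,d_i,e_i : 1\le i\le n\}$ and edge set $\{a_ia_{i+1}, b_ib_{i+1}, e_ie_{i+1}, a_ib_i, b_ic_i, c_id_i, d_ie_i, c_{i+1}d_i : 1\le i\le n\}$, indices taken modulo $n$. A vertex $w$ resolves $u,v$ if $d(u,w)\neq d(v,w)$ ($d$ the graph distance). A set $W$ is a local resolving set if every two adjacent vertices are resolved by some element of $W$. *)

theory Defs
  imports Main
begin

text \<open>Vertices of U_n. The paper's vertex x_i (1 \<le> i \<le> n) is represented as X (i-1),
  so indices range over {0..<n} and are taken modulo n.\<close>
datatype vtx = A nat | B nat | C nat | D nat | E nat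

definition U_vertices :: "nat \<Rightarrow> vtx set" where
  "U_vertices n = (\<Union>i\<in>{0..<n}. {A i, B i, C i, D i, E i})"

definition U_edge0 :: "nat \<Rightarrow> vtx \<Rightarrow> vtx \<Rightarrow> bool" where
  "U_edge0 n u v \<longleftrightarrow> (\<exists>i<n.
      (u = A i \<and> v = A ((i+1) mod n)) \<or>
      (u = B i \<and> v = B ((i+1) mod n)) \<or>
      (u = E i \<and> v = E ((i+1) mod n)) \<or>
      (u = A i \<and> v = B i) \<or>
      (u = B i \<and> v = C i) \<or>
      (u = C i \<and> v = D i) \<or>
      (u = D i \<and> v = E i) \<or>
      (u = C ((i+1) mod n) \<and> v = D i))"

definition U_adj :: "nat \<Rightarrow> vtx \<Rightarrow> vtx \<Rightarrow> bool" where
  "U_adj n u v \<longleftrightarrow> U_edge0 n u v \<or> U_edge0 n v u"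

fun is_walk :: "('a \<Rightarrow> 'a \<Rightarrow> bool) \<Rightarrow> 'a list \<Rightarrow> bool" where
  "is_walk adj [] = False"
| "is_walk adj [x] = True"
| "is_walk adj (x # y # xs) = (adj x y \<and> is_walk adj (y # xs))"

definition gdist :: "('a \<Rightarrow> 'a \<Rightarrow> bool) \<Rightarrow> 'a \<Rightarrow> 'a \<Rightarrow> nat" where
  "gdist adj u v = (LEAST k. \<exists>p. is_walk adj p \<and> hd p = u \<and> last p = v \<and> length p = k + 1)"

definition resolves :: "('a \<Rightarrow> 'a \<Rightarrow> bool) \<Rightarrow> 'a \<Rightarrow> 'a \<Rightarrow> 'a \<Rightarrow> bool" where
  "resolves adj w u v \<longleftrightarrow> gdist adj u w \<noteq> gdist adj v w"

definition local_resolving_set :: "'a set \<Rightarrow> ('a \<Rightarrow> 'a \<Rightarrow> bool) \<Rightarrow> 'a set \<Rightarrow> bool" where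
  "local_resolving_set V adj W \<longleftrightarrow> W \<subseteq> V \<and>
     (\<forall>u\<in>V. \<forall>v\<in>V. adj u v \<longrightarrow> (\<exists>w\<in>W. resolves adj w u v))"

end

theory Submission
  imports Defs
begin

lemma walk_lower_aux:
  assumes lip: "\<And>x y. adj x y \<Longrightarrow> (g x::nat) \<le> g y + 1"
  shows "is_walk adj (x # p) \<Longrightarrow> g x \<le> g (last (x # p)) + length p"
proof (induction p arbitrary: x)
  case Nil
  show ?case by simp
next
  case (Cons y p)
  hence a: "adj x y" "is_walk adj (y#p)" by auto
  have "g x \<le> g y + 1" using lip a(1) by blast
  moreover have "g y \<le> g (last (y#p)) + length p" using Cons.IH a(2) by blast
  ultimately show ?case by simp
qed

lemma walk_lower:
  assumes lip: "\<And>x y. adj x y \<Longrightarrow> (g x::nat) \<le> g y + 1"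
  shows "is_walk adj p \<Longrightarrow> g (hd p) \<le> g (last p) + (length p - 1)"
  using walk_lower_aux[of adj g, OF lip] by (cases p) auto

lemma walk_upper:
  assumes desc: "\<And>v. P v \<Longrightarrow> 0 < (g v::nat) \<Longrightarrow> \<exists>u. adj v u \<and> P u \<and> g u + 1 = g v"
    and zero: "\<And>v. P v \<Longrightarrow> g v = 0 \<Longrightarrow> v = w"
  shows "P v \<Longrightarrow> \<exists>p. is_walk adj p \<and> hd p = v \<and> last p = w \<and> length p = g v + 1"
proof (induction "g v" arbitrary: v)
  case 0
  then show ?case using zero[of v] by (intro exI[of _ "[v]"]) auto
next
  case (Suc m)
  then obtain u where u: "adj v u" "P u" "g u + 1 = g v" using desc[of v] by auto
  with Suc obtain p where p: "is_walk adj p" "hd p = u" "last p = w" "length p = g u + 1"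
    by (metis add_right_cancel Suc_eq_plus1)
  then obtain ps where ps: "p = u # ps" by (cases p) auto
  show ?case using p u ps by (intro exI[of _ "v # p"]) auto
qed

lemma gdist_eq:
  assumes lip: "\<And>x y. adj x y \<Longrightarrow> (g x::nat) \<le> g y + 1"
    and desc: "\<And>v. P v \<Longrightarrow> 0 < (g v::nat) \<Longrightarrow> \<exists>u. adj v u \<and> P u \<and> g u + 1 = g v"
    and zero: "\<And>v. P v \<Longrightarrow> g v = 0 \<Longrightarrow> v = w"
    and Pv: "P v" and gw: "g w = 0"
  shows "gdist adj v w = g v"
  unfolding gdist_def
proof (rule Least_equality)
  show "\<exists>p. is_walk adj p \<and> hd p = v \<and> last p = w \<and> length p = g v + 1"
    using walk_upper[of P g adj w v, OF desc zero Pv] by blast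
next
  fix y assume "\<exists>p. is_walk adj p \<and> hd p = v \<and> last p = w \<and> length p = y + 1"
  then obtain p where "is_walk adj p" "hd p = v" "last p = w" "length p = y + 1" by blast
  then show "g v \<le> y" using walk_lower[of adj g p, OF lip] gw by auto
qed

definition dc :: "nat \<Rightarrow> nat \<Rightarrow> nat \<Rightarrow> nat" where
  "dc n c i = (if i \<le> c then min (c - i) (n - (c - i)) else min (i - c) (n - (i - c)))"

definition gg :: "nat \<Rightarrow> nat \<Rightarrow> vtx \<Rightarrow> nat" where
  "gg n c v = (case v of A i \<Rightarrow> dc n c i | B i \<Rightarrow> dc n c i + 1 | C i \<Rightarrow> dc n c i + 2
     | D i \<Rightarrow> min (dc n c i) (dc n c ((i+1) mod n)) + 3
     | E i \<Rightarrow> min (dc n c i) (dc n c ((i+1) mod n)) + 4)"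

lemma mod_suc: "i < n \<Longrightarrow> Suc i mod (n::nat) = (if Suc i = n then 0 else Suc i)"
  by auto

lemma dc_lip1: "i < n \<Longrightarrow> c < n \<Longrightarrow> dc n c ((i+1) mod n) \<le> dc n c i + 1"
  by (cases "Suc i = n"; cases "i < c"; cases "i = c"; simp add: mod_suc dc_def min_def; arith)
lemma dc_lip2: "i < n \<Longrightarrow> c < n \<Longrightarrow> dc n c i \<le> dc n c ((i+1) mod n) + 1"
  by (cases "Suc i = n"; cases "i < c"; cases "i = c"; simp add: mod_suc dc_def min_def; arith)
lemma dc_zero: "i < n \<Longrightarrow> c < n \<Longrightarrow> dc n c i = 0 \<Longrightarrow> i = c"
  by (cases "i < c"; cases "i = c"; simp add: dc_def min_def split: if_split_asm)

lemma dc_desc: "i < n \<Longrightarrow> c < n \<Longrightarrow> 0 < dc n c i \<Longrightarrow>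
   dc n c ((i+1) mod n) + 1 = dc n c i \<or> (\<exists>j<n. (j+1) mod n = i \<and> dc n c j + 1 = dc n c i)"
proof -
  assume a: "i < n" "c < n" "0 < dc n c i"
  have ic: "i \<noteq> c" using a(3) by (auto simp: dc_def)
  have pred: "(i - 1 + 1) mod n = i" if "i > 0" using that a by simp
  have pred0: "(n - 1 + 1) mod n = 0" using a by simp
  show ?thesis
  proof (cases "c < i")
    case True
    show ?thesis
    proof (cases "i - c \<le> n - (i - c)")
      case True
      have "dc n c (i - 1) + 1 = dc n c i" using True \<open>c < i\<close> by (simp add: dc_def min_def; arith)
      then show ?thesis using pred[of] \<open>c < i\<close> a by (intro disjI2 exI[of _ "i - 1"]) auto
    next
      case False
      show ?thesis
      proof (cases "Suc i = n")
        case True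
        have "dc n c 0 + 1 = dc n c i" using True False \<open>c < i\<close> by (simp add: dc_def min_def; arith)
        then show ?thesis using True by simp
      next
        case F2: False
        have "dc n c (Suc i) + 1 = dc n c i" using F2 False \<open>c < i\<close> a by (simp add: dc_def min_def; arith)
        then show ?thesis using F2 a by (simp add: mod_suc)
      qed
    qed
  next
    case False
    then have ci: "i < c" using ic by simp
    show ?thesis
    proof (cases "c - i \<le> n - (c - i)")
      case True
      have "dc n c (Suc i) + 1 = dc n c i" using True ci by (simp add: dc_def min_def; arith)
      moreover have "Suc i \<noteq> n" using ci a by simp
      ultimately show ?thesis using a by (simp add: mod_suc)
    next
      case F1: False
      show ?thesis
      proof (cases "i = 0")
        case True
        have "dc n c (n - 1) + 1 = dc n c i" using True F1 ci a by (simp add: dc_def min_def; arith)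
        then show ?thesis using True pred0 a by (intro disjI2 exI[of _ "n - 1"]) auto
      next
        case F2: False
        have "dc n c (i - 1) + 1 = dc n c i" using F2 F1 ci a by (simp add: dc_def min_def; arith)
        then show ?thesis using pred F2 a by (intro disjI2 exI[of _ "i - 1"]) auto
      qed
    qed
  qed
qed

fun vidx :: "vtx \<Rightarrow> nat" where
  "vidx (A i) = i" | "vidx (B i) = i" | "vidx (C i) = i" | "vidx (D i) = i" | "vidx (E i) = i"

lemma memV: "v \<in> U_vertices n \<longleftrightarrow> vidx v < n"
  by (cases v) (auto simp: U_vertices_def)

lemma modlt: "0 < n \<Longrightarrow> (i+1) mod n < (n::nat)" by simp

lemma min_lip: "(a::nat) \<le> b+1 \<Longrightarrow> b \<le> a+1 \<Longrightarrow> c \<le> b+1 \<Longrightarrow> b \<le> c+1 \<Longrightarrow>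
  min a b \<le> min b c + 1 \<and> min b c \<le> min a b + 1"
  by (simp add: min_def)

lemma min_lip2: "(b::nat) \<le> a+1 \<Longrightarrow> a \<le> b+1 \<Longrightarrow>
  b + 2 \<le> min a b + 3 + 1 \<and> min a b + 3 \<le> b + 2 + 1"
  by (simp add: min_def)

lemma min_lip3: "(b::nat) \<le> a+1 \<Longrightarrow> a \<le> b+1 \<Longrightarrow>
  a + 2 \<le> min a b + 3 + 1 \<and> min a b + 3 \<le> a + 2 + 1"
  by (simp add: min_def)

lemma edge_lip:
  assumes e: "U_edge0 n x y" and c: "c < n"
  shows "gg n c x \<le> gg n c y + 1 \<and> gg n c y \<le> gg n c x + 1"
proof -
  obtain i where i: "i < n" and cs: "(x = A i \<and> y = A ((i+1) mod n)) \<or>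
      (x = B i \<and> y = B ((i+1) mod n)) \<or>
      (x = E i \<and> y = E ((i+1) mod n)) \<or>
      (x = A i \<and> y = B i) \<or>
      (x = B i \<and> y = C i) \<or>
      (x = C i \<and> y = D i) \<or>
      (x = D i \<and> y = E i) \<or>
      (x = C ((i+1) mod n) \<and> y = D i)" using e unfolding U_edge0_def
    apply (elim exE conjE) apply (rule that) apply assumption+ done
  define i' where "i' = (i+1) mod n"
  have i': "i' < n" using i unfolding i'_def by simp
  have l: "dc n c i' \<le> dc n c i + 1" "dc n c i \<le> dc n c i' + 1"
       "dc n c ((i'+1) mod n) \<le> dc n c i' + 1" "dc n c i' \<le> dc n c ((i'+1) mod n) + 1"
    using dc_lip1[OF i c] dc_lip2[OF i c] dc_lip1[OF i' c] dc_lip2[OF i' c] unfolding i'_def by auto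
  define i'' where "i'' = (i'+1) mod n"
  have q: "Suc i mod n = i'" "Suc i' mod n = i''" unfolding i'_def i''_def by simp_all
  have m1: "min (dc n c i) (dc n c i') \<le> min (dc n c i') (dc n c i'') + 1 \<and>
             min (dc n c i') (dc n c i'') \<le> min (dc n c i) (dc n c i') + 1"
    using min_lip l unfolding i''_def[symmetric] by blast
  have m2: "dc n c i' + 2 \<le> min (dc n c i) (dc n c i') + 3 + 1 \<and>
            min (dc n c i) (dc n c i') + 3 \<le> dc n c i' + 2 + 1"
    using min_lip2 l by blast
  have m3: "dc n c i + 2 \<le> min (dc n c i) (dc n c i') + 3 + 1 \<and>
            min (dc n c i) (dc n c i') + 3 \<le> dc n c i + 2 + 1"
    using min_lip3 l by blast
  have gA: "gg n c (A j) = dc n c j" "gg n c (B j) = dc n c j + 1" "gg n c (C j) = dc n c j + 2"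
     "gg n c (D j) = min (dc n c j) (dc n c ((j+1) mod n)) + 3"
     "gg n c (E j) = min (dc n c j) (dc n c ((j+1) mod n)) + 4" for j
    by (simp_all add: gg_def)
  from cs show ?thesis
  proof (elim disjE conjE)
    assume "x = A i" "y = A ((i+1) mod n)" then show ?thesis by (simp only: gA q i'_def[symmetric] i''_def[symmetric]) (use l in linarith)
  next
    assume "x = B i" "y = B ((i+1) mod n)" then show ?thesis by (simp only: gA q i'_def[symmetric] i''_def[symmetric]) (use l in linarith)
  next
    assume "x = E i" "y = E ((i+1) mod n)" then show ?thesis by (simp only: gA q i'_def[symmetric] i''_def[symmetric]) (use m1 in linarith)
  next
    assume "x = A i" "y = B i" then show ?thesis by (simp only: gA q i'_def[symmetric] i''_def[symmetric]) linarith
  next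
    assume "x = B i" "y = C i" then show ?thesis by (simp only: gA q i'_def[symmetric] i''_def[symmetric]) linarith
  next
    assume "x = C i" "y = D i" then show ?thesis by (simp only: gA q i'_def[symmetric] i''_def[symmetric]) (use m3 in linarith)
  next
    assume "x = D i" "y = E i" then show ?thesis by (simp only: gA q i'_def[symmetric] i''_def[symmetric]) linarith
  next
    assume "x = C ((i+1) mod n)" "y = D i" then show ?thesis by (simp only: gA q i'_def[symmetric] i''_def[symmetric]) (use m2 in linarith)
  qed
qed

lemma adj_lip: "U_adj n x y \<Longrightarrow> c < n \<Longrightarrow> gg n c x \<le> gg n c y + 1"
  unfolding U_adj_def using edge_lip by blast

lemma edge_in: "U_edge0 n x y \<Longrightarrow> x \<in> U_vertices n \<and> y \<in> U_vertices n"
  unfolding U_edge0_def memV by (elim exE conjE disjE) auto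

lemma desc:
  assumes v: "v \<in> U_vertices n" and c: "c < n" and g: "0 < gg n c v"
  shows "\<exists>u. U_adj n v u \<and> u \<in> U_vertices n \<and> gg n c u + 1 = gg n c v"
proof -
  have ex: "\<exists>u. U_edge0 n v u \<and> gg n c u + 1 = gg n c v \<or> U_edge0 n u v \<and> gg n c u + 1 = gg n c v"
  proof (cases v)
    case (A i)
    have i: "i < n" using v A by (simp add: memV)
    have "0 < dc n c i" using g A by (simp add: gg_def)
    from dc_desc[OF i c this] show ?thesis
    proof
      assume h: "dc n c ((i+1) mod n) + 1 = dc n c i"
      have "U_edge0 n (A i) (A ((i+1) mod n))" unfolding U_edge0_def using i by blast
      moreover have "gg n c (A ((i+1) mod n)) + 1 = gg n c v" using h A by (simp add: gg_def)
      ultimately show ?thesis using A by blast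
    next
      assume "\<exists>j<n. (j+1) mod n = i \<and> dc n c j + 1 = dc n c i"
      then obtain j where j: "j < n" "(j+1) mod n = i" "dc n c j + 1 = dc n c i" by blast
      have "U_edge0 n (A j) (A i)" unfolding U_edge0_def using j by blast
      moreover have "gg n c (A j) + 1 = gg n c v" using j A by (simp add: gg_def)
      ultimately show ?thesis using A by blast
    qed
  next
    case (B i)
    have i: "i < n" using v B by (simp add: memV)
    have "U_edge0 n (A i) (B i)" unfolding U_edge0_def using i by blast
    moreover have "gg n c (A i) + 1 = gg n c v" using B by (simp add: gg_def)
    ultimately show ?thesis using B by blast
  next
    case (C i)
    have i: "i < n" using v C by (simp add: memV)
    have "U_edge0 n (B i) (C i)" unfolding U_edge0_def using i by blast
    moreover have "gg n c (B i) + 1 = gg n c v" using C by (simp add: gg_def)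
    ultimately show ?thesis using C by blast
  next
    case (E i)
    have i: "i < n" using v E by (simp add: memV)
    have "U_edge0 n (D i) (E i)" unfolding U_edge0_def using i by blast
    moreover have "gg n c (D i) + 1 = gg n c v" using E by (simp add: gg_def)
    ultimately show ?thesis using E by blast
  next
    case (D i)
    have i: "i < n" using v D by (simp add: memV)
    have e1: "U_edge0 n (C i) (D i)" unfolding U_edge0_def using i by blast
    have e2: "U_edge0 n (C ((i+1) mod n)) (D i)" unfolding U_edge0_def using i by blast
    show ?thesis
    proof (cases "dc n c i \<le> dc n c ((i+1) mod n)")
      case True
      then have "gg n c (C i) + 1 = gg n c v" using D by (simp add: gg_def min_def)
      then show ?thesis using D e1 by blast
    next
      case False
      then have "gg n c (C ((i+1) mod n)) + 1 = gg n c v" using D by (simp add: gg_def min_def)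
      then show ?thesis using D e2 by blast
    qed
  qed
  then obtain u where u: "(U_edge0 n v u \<or> U_edge0 n u v)" "gg n c u + 1 = gg n c v" by blast
  from u(1) have "U_adj n v u" unfolding U_adj_def by blast
  moreover from u(1) have "u \<in> U_vertices n" using edge_in[of n v u] edge_in[of n u v] by blast
  ultimately show ?thesis using u(2) by blast
qed

lemma zero_root:
  assumes v: "v \<in> U_vertices n" and c: "c < n" and g: "gg n c v = 0"
  shows "v = A c"
proof (cases v)
  case (A i)
  then show ?thesis using dc_zero[of i n c] v c g by (simp add: memV gg_def)
qed (use g in \<open>auto simp: gg_def\<close>)

lemma gdist_U:
  assumes c: "c < n" and v: "v \<in> U_vertices n"
  shows "gdist (U_adj n) v (A c) = gg n c v"
proof (rule gdist_eq[where P = "\<lambda>v. v \<in> U_vertices n"])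
  show "gg n c (A c) = 0" by (simp add: gg_def dc_def)
qed (use adj_lip[OF _ c] desc[OF _ c] zero_root[OF _ c] v in blast)+


lemma vals1:
  assumes n: "n = 2*k+1" and i: "i < n"
  shows "dc n 0 i = (if i \<le> k then i else n - i)"
    and "dc n k i = (if i \<le> k then k - i else i - k)"
  using n i by (simp_all add: dc_def min_def; arith)+

lemma vals2:
  assumes n: "n = 2*k+1" and i: "i < n"
  shows "min (dc n 0 i) (dc n 0 (Suc i mod n)) = (if i < k then i else 2*k - i)"
    and "min (dc n k i) (dc n k (Suc i mod n)) = (if i < k then k - i - 1 else i - k)"
proof -
  have "min (dc n 0 i) (dc n 0 (Suc i mod n)) = (if i < k then i else 2*k - i) \<and>
        min (dc n k i) (dc n k (Suc i mod n)) = (if i < k then k - i - 1 else i - k)"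
  proof (cases "Suc i = n")
    case True
    then show ?thesis using vals1[OF n i] vals1[OF n, of 0] n by (simp add: min_def)
  next
    case False
    then have si: "Suc i < n" using i by simp
    show ?thesis using vals1[OF n i] vals1[OF n si] False n i by (simp add: mod_suc min_def; arith)
  qed
  then show "min (dc n 0 i) (dc n 0 (Suc i mod n)) = (if i < k then i else 2*k - i)"
    and "min (dc n k i) (dc n k (Suc i mod n)) = (if i < k then k - i - 1 else i - k)" by auto
qed


lemma res:
  assumes n: "n = 2*k+1" and k: "1 \<le> k" and e: "U_edge0 n u v"
  shows "gg n 0 u \<noteq> gg n 0 v \<or> gg n k u \<noteq> gg n k v"
proof -
  obtain i where i: "i < n" and cs: "(u = A i \<and> v = A ((i+1) mod n)) \<or>
      (u = B i \<and> v = B ((i+1) mod n)) \<or>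
      (u = E i \<and> v = E ((i+1) mod n)) \<or>
      (u = A i \<and> v = B i) \<or>
      (u = B i \<and> v = C i) \<or>
      (u = C i \<and> v = D i) \<or>
      (u = D i \<and> v = E i) \<or>
      (u = C ((i+1) mod n) \<and> v = D i)" using e unfolding U_edge0_def
    apply (elim exE conjE) apply (rule that) apply assumption+ done
  define j where "j = Suc i mod n"
  have jn: "j < n" using n unfolding j_def by simp
  have jv: "j = (if Suc i = n then 0 else Suc i)" unfolding j_def using i by (simp add: mod_suc)
  have G: "gg n c (A x) = dc n c x" "gg n c (B x) = dc n c x + 1" "gg n c (C x) = dc n c x + 2"
     "gg n c (D x) = min (dc n c x) (dc n c (Suc x mod n)) + 3"
     "gg n c (E x) = min (dc n c x) (dc n c (Suc x mod n)) + 4" for c x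
    by (simp_all add: gg_def)
  note V1 = vals1[OF n i] vals1[OF n jn]
  note V2 = vals2[OF n i] vals2[OF n jn]
  have k0: "0 < k" using k by simp
  from cs k0 show ?thesis
    apply (elim disjE conjE)
    apply (simp_all only: G Suc_eq_plus1[symmetric] j_def[symmetric])
    apply (simp_all only: V2)
    apply (simp_all only: V1)
    apply (simp_all add: jv n split: if_split_asm)
    apply arith+
    done
qed


theorem lemma4p3:
  fixes k n :: nat
  assumes "k \<ge> 1" and "n = 2 * k + 1"
  shows "local_resolving_set (U_vertices n) (U_adj n) {A 0, A k}"
  unfolding local_resolving_set_def
proof (intro conjI ballI impI)
  have kn: "k < n" "0 < n" using assms by auto
  show "{A 0, A k} \<subseteq> U_vertices n" using kn by (simp add: memV)
  fix u v assume u: "u \<in> U_vertices n" and v: "v \<in> U_vertices n" and a: "U_adj n u v"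
  have "gg n 0 u \<noteq> gg n 0 v \<or> gg n k u \<noteq> gg n k v"
    using a res[OF assms(2) assms(1), of u v] res[OF assms(2) assms(1), of v u]
    unfolding U_adj_def by metis
  then show "\<exists>w\<in>{A 0, A k}. resolves (U_adj n) w u v"
    unfolding resolves_def using gdist_U[OF kn(2) u] gdist_U[OF kn(2) v]
      gdist_U[OF kn(1) u] gdist_U[OF kn(1) v] by auto
qed

end
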